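(* Assume $1\le k\le n-1$ and the setting of the context. Then $\mathbb V=\bigoplus_{\alpha\in\Omega_{\mathbb V}}V_\alpha$, where each $V_\alpha$ is a $k$-submodule of $\mathbb V$ (i.e. $[u,y_2,\dots,y_k,x_{k+1},\dots,x_n]_\sigma\in V_\alpha$ for all $\sigma$, $u\in V_\alpha$, $y_l\in\mathbb V$, $x_l\in\mathbb A$) admitting a multiplicative basis inherited from $\mathfrak B$ (a subset of $\mathfrak B$ which is a basis of $V_\alpha$), and $\mathbb A=\bigoplus_{\beta\in\Omega_{\mathbb A}}A_\beta$, where each $A_\beta$ is an ideal of $\mathbb A$ (i.e. $\langle a_1,\dots,a_n\rangle\in A_\beta$ whenever some $a_l\in A_\beta$ and the others lie in $\mathbb A$) admitting a multiplicative basis inherited from $\mathfrak B'$. Furthermore, setting $\Omega'_{\mathbb V}=\{\alpha\in\Omega_{\mathbb V}:\mathcal P(V_\alpha,\mathbb V,\dots,\mathbb V;\mathbb A,\dots,\mathbb A)\neq0\}$ and $\Omega'_{\mathbb A}=\{\beta\in\Omega_{\mathbb A}:\mathcal P(\mathbb V,\dots,\mathbb V;A_\beta,\mathbb A,\dots,\mathbb A)\neq0\}$, there is a bijection $f:\Omega'_{\mathbb V}\to\Omega'_{\mathbb A}$ such that for every $\alpha\in\Omega'_{\mathbb V}$, $\mathcal P(V_\alpha,\mathbb V,\dots,\mathbb V;A_{f(\alpha)},\mathbb A,\dots,\mathbb A)\neq0$ and $\mathcal P(V_\alpha,\mathbb V,\dots,\mathbb V;A_\beta,\mathbb A,\dots,\mathbb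 A)=0$ for every $\beta\in\Omega_{\mathbb A}$ with $\beta\neq f(\alpha)$.
   Context: Fix integers $n\ge2$, $1\le k\le n$, and an arbitrary field $\mathbb F$; $S_n$ is the symmetric group. An $n$-ary algebra is an $\mathbb F$-vector space $\mathbb A$ with an $n$-linear map $\langle\cdot,\dots,\cdot\rangle:\mathbb A^n\to\mathbb A$; a basis $\mathfrak B'=\{e_j\}_{j\in J}$ of $\mathbb A$ is multiplicative if $\langle e_{j_1},\dots,e_{j_n}\rangle\in\mathbb F e_j$ for some $j\in J$, for all $j_1,\dots,j_n\in J$. Let $\mathbb V$ be a $k$-module over $\mathbb A$: an $\mathbb F$-vector space with, for every $\sigma\in S_n$, an $n$-linear map $\mathbb V^k\times\mathbb A^{n-k}\to\mathbb V$, $(y_1,\dots,y_k,x_{k+1},\dots,x_n)\mapsto[y_1,\dots,y_k,x_{k+1},\dots,x_n]_\sigma$ (the $l$-th argument placed in position $\sigma(l)$), and assume $\mathbb V$ has a basis $\mathfrak B=\{v_i\}_{i\in I}$ which is multiplicative with respect to $\mathfrak B'$, i.e. $[v_{i_1},\dots,v_{i_k},e_{j_{k+1}},\dots,e_{j_n}]_\sigma\in\mathbb F v_r$ for some $r\in I$, for all $\sigma$ and indices. Dimensions are arbitrary. For subspaces $S_1,\dots,S_k\subseteq\mathbb V$ and $T_{k+1},\dots,T_n\subseteq\mathbb A$ let $\mathcal P(S_1,\dots,S_k;T_{k+1},\dots,T_n)$ be the linear span of all $[s_1,\dots,s_k,t_{k+1},\dots,t_n]_\sigma$ with $\sigma\in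 S_n$, $s_l\in S_l$, $t_l\in T_l$. Construction: on $\mathbb A\oplus\mathbb V$ with basis $\mathfrak B''=\mathfrak B\,\dot\cup\,\mathfrak B'$ (index set $K=I\,\dot\cup\,J$) define, for every $\sigma\in S_n$, $n$-linear maps $\llbracket\cdot\rrbracket_\sigma$ by: $\llbracket x_1,\dots,x_n\rrbracket_\sigma$ is $\langle\cdot\rangle$ applied to the arguments $x_l\in\mathbb A$ placed in positions $\sigma(l)$; $\llbracket y_1,\dots,y_k,x_{k+1},\dots,x_n\rrbracket_\sigma=[y_1,\dots,y_k,x_{k+1},\dots,x_n]_\sigma$ for $y_l\in\mathbb V$, $x_l\in\mathbb A$; and $\llbracket y_1,\dots,y_t,x_{t+1},\dots,x_n\rrbracket_\sigma=0$ for $y_l\in\mathbb V$, $x_l\in\mathbb A$, $1\le t\le n$, $t\neq k$. Then $\mathbb A\oplus\mathbb V$ with these maps is an $n$-module over itself (the case "$k=n$", no second-type arguments) with multiplicative basis $\mathfrak B''$. Connections on $K$: let $\overline K=\{\overline x:x\in K\}$ be new symbols, $\overline{\overline x}=x$, and write $u_x$ for the element of $\mathfrak B''$ indexed by $x\in K$. For $\sigma\in S_n$ and $x_1,\dots,x_n\in K$ let $a_\sigma(x_1,\dots,x_n)=\emptyset$ if $\llbracket u_{x_1},\dots,u_{x_n}\rrbracket_\sigma=0$ and $=\{r\}$ if it is a nonzero element of $\mathbb F u_r$; let $b_\sigma(x,\overline x_2,\dots,\overline x_n)=\{x'\in K:a_\sigma(x',x_2,\dots,x_n)=\{x\}\}$.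 For $x\in K$ and $Z=(z_2,\dots,z_n)\in(K\,\dot\cup\,\overline K)^{n-1}$ set $\mu(x,Z)=\bigcup_\sigma a_\sigma(x,Z)$ if all $z_l\in K$, $=\bigcup_\sigma b_\sigma(x,Z)$ if all $z_l\in\overline K$, and $\emptyset$ otherwise; $\phi(\mathfrak A,Z)=\bigcup_{x\in\mathfrak A}\mu(x,Z)$ for $\mathfrak A\subseteq K$. Distinct $x,x'\in K$ are connected if there are $Z_1,\dots,Z_t\in(K\,\dot\cup\,\overline K)^{n-1}$, $t\ge1$, such that with $\mathfrak A_0=\{x\}$, $\mathfrak A_m=\phi(\mathfrak A_{m-1},Z_m)$ one has $\mathfrak A_m\neq\emptyset$ for $m<t$ and $x'\in\mathfrak A_t$; each $x$ is connected to itself. This is an equivalence relation on $K$; let $\Omega$ be its set of classes and, for $\alpha\in\Omega$, $U_\alpha=\bigoplus_{x\in\alpha}\mathbb F u_x$, so $\mathbb A\oplus\mathbb V=\bigoplus_{\alpha\in\Omega}U_\alpha$. Put $V_\alpha=U_\alpha\cap\mathbb V$, $A_\alpha=U_\alpha\cap\mathbb A$, $\Omega_{\mathbb V}=\{\alpha\in\Omega:V_\alpha\neq0\}$, $\Omega_{\mathbb A}=\{\alpha\in\Omega:A_\alpha\neq0\}$. *)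

theory Defs
  imports Complex_Main "HOL-Combinatorics.Permutations"
begin

text \<open>Abstract vector spaces over a field 'f are given by scalar multiplications
  sA :: 'f => 'a => 'a (the algebra A) and sV :: 'f => 'v => 'v (the module V);
  linear notions (span, subspace, dependent) are those of HOL's Modules theory.
  Positions of arguments are numbered 0..n-1; S_n is {s. s permutes {0..<n}}.\<close>

definition multilinear ::
  "('f::field \<Rightarrow> 'b::ab_group_add \<Rightarrow> 'b) \<Rightarrow> ('f \<Rightarrow> 'c::ab_group_add \<Rightarrow> 'c) \<Rightarrow> nat
     \<Rightarrow> ('b list \<Rightarrow> 'c) \<Rightarrow> bool" where
  "multilinear s t m f \<longleftrightarrow>
     (\<forall>xs. length xs = m \<longrightarrow>
        (\<forall>i<m. \<forall>x y. f (xs[i := x + y]) = f (xs[i := x]) + f (xs[i := y])) \<and>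
        (\<forall>i<m. \<forall>c x. f (xs[i := s c x]) = t c (f (xs[i := x]))))"

definition internal_direct_sum ::
  "('f::field \<Rightarrow> 'b::ab_group_add \<Rightarrow> 'b) \<Rightarrow> ('x \<Rightarrow> 'b set) \<Rightarrow> 'x set \<Rightarrow> bool" where
  "internal_direct_sum s W Idx \<longleftrightarrow>
     (\<forall>\<alpha>\<in>Idx. module.subspace s (W \<alpha>)) \<and>
     module.span s (\<Union>\<alpha>\<in>Idx. W \<alpha>) = UNIV \<and>
     (\<forall>\<alpha>\<in>Idx. W \<alpha> \<inter> module.span s (\<Union>\<beta>\<in>Idx - {\<alpha>}. W \<beta>) = {0})"

locale nmod_data =
  fixes n :: nat and k :: nat
    and sA :: "'f::field \<Rightarrow> 'a::ab_group_add \<Rightarrow> 'a"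
    and sV :: "'f \<Rightarrow> 'v::ab_group_add \<Rightarrow> 'v"
    and prodA :: "'a list \<Rightarrow> 'a"
    and act :: "(nat \<Rightarrow> nat) \<Rightarrow> 'v list \<Rightarrow> 'a list \<Rightarrow> 'v"
        \<comment> \<open>act s ys xs = [y_1,...,y_k,x_(k+1),...,x_n]_s\<close>
    and e :: "'j \<Rightarrow> 'a"
    and v :: "'i \<Rightarrow> 'v"
begin

definition setting :: bool where
  "setting \<longleftrightarrow>
     2 \<le> n \<and> 1 \<le> k \<and> k \<le> n \<and>
     vector_space sA \<and> vector_space sV \<and>
     multilinear sA sA n prodA \<and>
     (\<forall>\<sigma>. \<sigma> permutes {0..<n} \<longrightarrow>
        (\<forall>xs. length xs = n - k \<longrightarrow> multilinear sV sV k (\<lambda>ys. act \<sigma> ys xs)) \<and>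
        (\<forall>ys. length ys = k \<longrightarrow> multilinear sA sV (n - k) (\<lambda>xs. act \<sigma> ys xs))) \<and>
     inj e \<and> \<not> module.dependent sA (range e) \<and> module.span sA (range e) = UNIV \<and>
     inj v \<and> \<not> module.dependent sV (range v) \<and> module.span sV (range v) = UNIV \<and>
     (\<forall>js. length js = n \<longrightarrow> (\<exists>j. prodA (map e js) \<in> module.span sA {e j})) \<and>
     (\<forall>\<sigma> is js. \<sigma> permutes {0..<n} \<longrightarrow> length is = k \<longrightarrow> length js = n - k \<longrightarrow>
        (\<exists>r. act \<sigma> (map v is) (map e js) \<in> module.span sV {v r}))"

text \<open>Elements of the index set K = I \<union> J (Inl for I, Inr for J) and the basis
  B'' = B \<union> B' of A \<oplus> V (modelled as 'a \<times> 'v).\<close>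
definition ub :: "'i + 'j \<Rightarrow> 'a \<times> 'v" where
  "ub x = (case x of Inl i \<Rightarrow> (0, v i) | Inr j \<Rightarrow> (e j, 0))"

text \<open>The product [[u_x1,...,u_xn]]_s of basis elements of A \<oplus> V.  The l-th argument
  is placed in position s(l); an argument list that is not already ordered
  "V-arguments first" is reordered by the stable sorting permutation p
  (V-positions first, then A-positions), using [[u]]_s = [[u o p]]_(s o p).\<close>
definition bprod :: "(nat \<Rightarrow> nat) \<Rightarrow> ('i + 'j) list \<Rightarrow> 'a \<times> 'v" where
  "bprod \<sigma> xs =
    (let P = filter (\<lambda>l. isl (xs ! l)) [0..<n];
         Q = filter (\<lambda>l. \<not> isl (xs ! l)) [0..<n];
         \<pi> = (\<lambda>m. if m < n then (P @ Q) ! m else m)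
     in if length P = 0
        then (prodA (map (\<lambda>p. e (projr (xs ! inv \<sigma> p))) [0..<n]), 0)
        else if length P = k
        then (0, act (\<sigma> \<circ> \<pi>) (map (\<lambda>l. v (projl (xs ! l))) P)
                                (map (\<lambda>l. e (projr (xs ! l))) Q))
        else (0, 0))"

definition a_set :: "(nat \<Rightarrow> nat) \<Rightarrow> ('i + 'j) list \<Rightarrow> ('i + 'j) set" where
  "a_set \<sigma> xs = {r. bprod \<sigma> xs \<noteq> (0, 0) \<and>
       (\<exists>c. bprod \<sigma> xs = (sA c (fst (ub r)), sV c (snd (ub r))))}"

definition b_set :: "(nat \<Rightarrow> nat) \<Rightarrow> ('i + 'j) \<Rightarrow> ('i + 'j) list \<Rightarrow> ('i + 'j) set" where
  "b_set \<sigma> x zs = {x'. a_set \<sigma> (x' # zs) = {x}}"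

text \<open>Z \<in> (K \<union> K-bar)^(n-1): Inl z stands for z \<in> K, Inr z for the barred symbol.\<close>
definition mu :: "('i + 'j) \<Rightarrow> (('i + 'j) + ('i + 'j)) list \<Rightarrow> ('i + 'j) set" where
  "mu x Z =
    (if length Z \<noteq> n - 1 then {}
     else if list_all isl Z then (\<Union>\<sigma>\<in>{\<sigma>. \<sigma> permutes {0..<n}}. a_set \<sigma> (x # map projl Z))
     else if list_all (\<lambda>z. \<not> isl z) Z
       then (\<Union>\<sigma>\<in>{\<sigma>. \<sigma> permutes {0..<n}}. b_set \<sigma> x (map projr Z))
     else {})"

definition phi :: "('i + 'j) set \<Rightarrow> (('i + 'j) + ('i + 'j)) list \<Rightarrow> ('i + 'j) set" where
  "phi S Z = (\<Union>x\<in>S. mu x Z)"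

definition connected :: "('i + 'j) \<Rightarrow> ('i + 'j) \<Rightarrow> bool" where
  "connected x x' \<longleftrightarrow> x = x' \<or>
     (\<exists>Zs. Zs \<noteq> [] \<and> (\<forall>Z\<in>set Zs. length Z = n - 1) \<and>
        (\<forall>m<length Zs. foldl phi {x} (take m Zs) \<noteq> {}) \<and>
        x' \<in> foldl phi {x} Zs)"

definition Omega :: "('i + 'j) set set" where
  "Omega = UNIV // {(x, y). connected x y}"

definition V_part :: "('i + 'j) set \<Rightarrow> 'v set" where
  "V_part \<alpha> = module.span sV {v i | i. Inl i \<in> \<alpha>}"

definition A_part :: "('i + 'j) set \<Rightarrow> 'a set" where
  "A_part \<alpha> = module.span sA {e j | j. Inr j \<in> \<alpha>}"

definition Omega_V :: "('i + 'j) set set" where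
  "Omega_V = {\<alpha>\<in>Omega. V_part \<alpha> \<noteq> {0}}"

definition Omega_A :: "('i + 'j) set set" where
  "Omega_A = {\<alpha>\<in>Omega. A_part \<alpha> \<noteq> {0}}"

text \<open>P(S_1,...,S_k; T_(k+1),...,T_n), with Ss the list of the S_l and Ts of the T_l.\<close>
definition Pspan :: "'v set list \<Rightarrow> 'a set list \<Rightarrow> 'v set" where
  "Pspan Ss Ts = module.span sV
     {act \<sigma> ys xs | \<sigma> ys xs. \<sigma> permutes {0..<n} \<and>
        length ys = length Ss \<and> length xs = length Ts \<and>
        (\<forall>l<length Ss. ys ! l \<in> Ss ! l) \<and> (\<forall>l<length Ts. xs ! l \<in> Ts ! l)}"

definition k_submodule :: "'v set \<Rightarrow> bool" where
  "k_submodule W \<longleftrightarrow> module.subspace sV W \<and>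
     (\<forall>\<sigma> ys xs. \<sigma> permutes {0..<n} \<longrightarrow> length ys = k \<longrightarrow> length xs = n - k \<longrightarrow>
        hd ys \<in> W \<longrightarrow> act \<sigma> ys xs \<in> W)"

definition ideal_A :: "'a set \<Rightarrow> bool" where
  "ideal_A W \<longleftrightarrow> module.subspace sA W \<and>
     (\<forall>as. length as = n \<longrightarrow> (\<exists>l<n. as ! l \<in> W) \<longrightarrow> prodA as \<in> W)"

definition inherited_basis_V :: "'v set \<Rightarrow> bool" where
  "inherited_basis_V W \<longleftrightarrow> (\<exists>S\<subseteq>range v. \<not> module.dependent sV S \<and> module.span sV S = W)"

definition inherited_basis_A :: "'a set \<Rightarrow> bool" where
  "inherited_basis_A W \<longleftrightarrow> (\<exists>S\<subseteq>range e. \<not> module.dependent sA S \<and> module.span sA S = W)"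

definition Omega'_V :: "('i + 'j) set set" where
  "Omega'_V = {\<alpha>\<in>Omega_V.
      Pspan (V_part \<alpha> # replicate (k - 1) UNIV) (replicate (n - k) UNIV) \<noteq> {0}}"

definition Omega'_A :: "('i + 'j) set set" where
  "Omega'_A = {\<beta>\<in>Omega_A.
      Pspan (replicate k UNIV) (A_part \<beta> # replicate (n - k - 1) UNIV) \<noteq> {0}}"

end

end

theory Submission
  imports Defs
begin

lemma ml_reduce:
  assumes VS: "vector_space s" and VT: "vector_space t" and MLin: "multilinear s t m f"
    and T: "module.subspace t T"
    and G: "\<And>ws. length ws = m \<Longrightarrow> (\<forall>i<m. ws!i \<in> S i) \<Longrightarrow> f ws \<in> T"
    and L: "length xs = m" and X: "\<forall>i<m. xs!i \<in> module.span s (S i)"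
  shows "f xs \<in> T"
proof -
  interpret s: vector_space s by (rule VS)
  interpret t: vector_space t by (rule VT)
  have "\<forall>ws. length ws = m \<longrightarrow> (\<forall>i<p. ws!i \<in> s.span (S i)) \<longrightarrow> (\<forall>i. p \<le> i \<and> i < m \<longrightarrow> ws!i \<in> S i) \<longrightarrow> f ws \<in> T"
    if "p \<le> m" for p
    using that
  proof (induction p)
    case 0
    then show ?case using G by auto
  next
    case (Suc p)
    show ?case
    proof (intro allI impI)
      fix ws assume lw: "length ws = m" and A1: "\<forall>i<Suc p. ws!i \<in> s.span (S i)"
        and A2: "\<forall>i. Suc p \<le> i \<and> i < m \<longrightarrow> ws!i \<in> S i"
      have pm: "p < m" using Suc by auto
      have ML1: "\<And>x y. f (ws[p := x + y]) = f (ws[p := x]) + f (ws[p := y])"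
        and ML2: "\<And>c x. f (ws[p := s c x]) = t c (f (ws[p := x]))"
        using MLin lw pm unfolding multilinear_def by blast+
      have sub: "s.subspace {x. f (ws[p := x]) \<in> T}"
      proof (rule s.subspaceI)
        have "f (ws[p := 0]) = f (ws[p := s 0 0])" by simp
        also have "\<dots> = t 0 (f (ws[p := 0]))" by (rule ML2)
        also have "\<dots> = 0" by simp
        finally show "0 \<in> {x. f (ws[p := x]) \<in> T}" using t.subspace_0[OF T] by simp
      next
        fix x y assume "x \<in> {x. f (ws[p := x]) \<in> T}" "y \<in> {x. f (ws[p := x]) \<in> T}"
        then show "x + y \<in> {x. f (ws[p := x]) \<in> T}" using ML1 t.subspace_add[OF T] by simp
      next
        fix c x assume "x \<in> {x. f (ws[p := x]) \<in> T}"
        then show "s c x \<in> {x. f (ws[p := x]) \<in> T}" using ML2 t.subspace_scale[OF T] by simp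
      qed
      have base: "x \<in> {x. f (ws[p := x]) \<in> T}" if xS: "x \<in> S p" for x
      proof -
        have "f (ws[p := x]) \<in> T"
          by (rule Suc.IH[rule_format, of "ws[p := x]"])
             (use pm lw A1 A2 xS in \<open>auto simp: nth_list_update\<close>)
        then show ?thesis by simp
      qed
      have "ws ! p \<in> {x. f (ws[p := x]) \<in> T}"
        using s.span_induct[of "ws!p" "S p" "\<lambda>x. f (ws[p := x]) \<in> T"] A1 sub base by auto
      then show "f ws \<in> T" by simp
    qed
  qed
  from this[of m] L X show ?thesis by auto
qed

lemma (in module) span_disjoint_indep:
  assumes "independent B" "S1 \<subseteq> B" "S2 \<subseteq> B" "S1 \<inter> S2 = {}"
    and x1: "x \<in> span S1" and x2: "x \<in> span S2"
  shows "x = 0"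
proof -
  have i1: "independent S1" and i2: "independent S2" using assms independent_mono by blast+
  have xB: "x \<in> span B" using x1 span_mono assms(2) by blast
  have r1: "representation B x = representation S1 x"
    by (rule representation_eqI[OF assms(1) xB])
       (use representation_ne_zero[of S1 x] assms(2) finite_representation[of S1 x]
            sum_nonzero_representation_eq[OF i1 x1] in auto)
  have r2: "representation B x = representation S2 x"
    by (rule representation_eqI[OF assms(1) xB])
       (use representation_ne_zero[of S2 x] assms(3) finite_representation[of S2 x]
            sum_nonzero_representation_eq[OF i2 x2] in auto)
  have z: "{b. representation B x b \<noteq> 0} = {}"
    using r1 r2 representation_ne_zero[of S1 x] representation_ne_zero[of S2 x] assms(4) by auto
  show ?thesis using sum_nonzero_representation_eq[OF assms(1) xB] z by simp
qed

lemma map_nth_filter: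
  "map (\<lambda>l. g (xs ! l)) (filter (\<lambda>l. p (xs ! l)) [0..<length xs]) = map g (filter p xs)"
proof (induction xs rule: rev_induct)
  case Nil then show ?case by simp
next
  case (snoc x xs)
  have "map (\<lambda>l. g ((xs @ [x]) ! l)) (filter (\<lambda>l. p ((xs @ [x]) ! l)) [0..<length xs])
      = map (\<lambda>l. g (xs ! l)) (filter (\<lambda>l. p (xs ! l)) [0..<length xs])"
  proof -
    have "filter (\<lambda>l. p ((xs @ [x]) ! l)) [0..<length xs] = filter (\<lambda>l. p (xs ! l)) [0..<length xs]"
      by (rule filter_cong) (auto simp: nth_append)
    moreover have "\<forall>l\<in>set (filter (\<lambda>l. p (xs ! l)) [0..<length xs]). g ((xs @ [x]) ! l) = g (xs ! l)"
      by (auto simp: nth_append)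
    ultimately show ?thesis by simp
  qed
  then show ?case using snoc by simp
qed

lemma perm_of_list:
  assumes "distinct L" "set L = {0..<n}"
  shows "(\<lambda>m. if m < n then L ! m else m) permutes {0..<n}"
proof (rule bij_imp_permutes)
  have ln: "length L = n" using assms distinct_card by fastforce
  have "bij_betw ((!) L) {..<length L} (set L)" by (rule bij_betw_nth) (use assms in auto)
  then have "bij_betw ((!) L) {0..<n} {0..<n}" using ln assms by (simp add: lessThan_atLeast0)
  then show "bij_betw (\<lambda>m. if m < n then L ! m else m) {0..<n} {0..<n}"
    by (rule bij_betw_cong[THEN iffD1, rotated]) auto
qed auto

lemma map_inv_range: "(\<forall>x\<in>set ws. x \<in> range f) \<Longrightarrow> map f (map (inv f) ws) = ws"
  by (induction ws) (auto simp: f_inv_into_f)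

lemma (in vector_space) dsum_basis:
  assumes ind: "independent (range b)" and sp: "span (range b) = UNIV" and ib: "inj b"
    and ig: "inj g"
    and disj: "\<And>\<alpha> \<beta> x. \<alpha> \<in> Om \<Longrightarrow> \<beta> \<in> Om \<Longrightarrow> x \<in> \<alpha> \<Longrightarrow> x \<in> \<beta> \<Longrightarrow> \<alpha> = \<beta>"
    and cover: "\<And>i. \<exists>\<alpha>\<in>Om. g i \<in> \<alpha>"
    and W: "\<And>\<alpha>. W \<alpha> = span {b i | i. g i \<in> \<alpha>}"
  shows "internal_direct_sum scale W {\<alpha>\<in>Om. W \<alpha> \<noteq> {0}}"
  unfolding internal_direct_sum_def
proof (intro conjI ballI)
  let ?Idx = "{\<alpha>\<in>Om. W \<alpha> \<noteq> {0}}"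
  show "subspace (W \<alpha>)" for \<alpha> unfolding W by simp
  have bnz: "b i \<noteq> 0" for i using ind dependent_zero by force
  have "range b \<subseteq> (\<Union>\<alpha>\<in>?Idx. W \<alpha>)"
  proof
    fix x assume "x \<in> range b"
    then obtain i where x: "x = b i" by auto
    obtain \<alpha> where a: "\<alpha> \<in> Om" "g i \<in> \<alpha>" using cover by blast
    have "b i \<in> W \<alpha>" unfolding W using a by (auto intro: span_base)
    then have "W \<alpha> \<noteq> {0}" using bnz by auto
    then show "x \<in> (\<Union>\<alpha>\<in>?Idx. W \<alpha>)" using a \<open>b i \<in> W \<alpha>\<close> x by auto
  qed
  then have "span (range b) \<subseteq> span (\<Union>\<alpha>\<in>?Idx. W \<alpha>)" by (rule span_mono)
  then show "span (\<Union>\<alpha>\<in>?Idx. W \<alpha>) = UNIV" using sp by auto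
  fix \<alpha> assume aI: "\<alpha> \<in> ?Idx"
  let ?G1 = "{b i | i. g i \<in> \<alpha>}"
  let ?G2 = "{b i | i. \<exists>\<beta>\<in>?Idx - {\<alpha>}. g i \<in> \<beta>}"
  have sub: "(\<Union>\<beta>\<in>?Idx - {\<alpha>}. W \<beta>) \<subseteq> span ?G2"
    unfolding W by (intro UN_least span_mono) auto
  have sub2: "span (\<Union>\<beta>\<in>?Idx - {\<alpha>}. W \<beta>) \<subseteq> span ?G2"
    using span_mono[OF sub] span_span by simp
  have dj: "?G1 \<inter> ?G2 = {}"
  proof (rule ccontr)
    assume "?G1 \<inter> ?G2 \<noteq> {}"
    then obtain i i' \<beta> where "b i = b i'" "g i \<in> \<alpha>" "\<beta> \<in> ?Idx - {\<alpha>}" "g i' \<in> \<beta>" by blast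
    then have "g i \<in> \<beta>" using ib by (auto dest: injD)
    then show False using disj[of \<alpha> \<beta> "g i"] aI \<open>\<beta> \<in> ?Idx - {\<alpha>}\<close> \<open>g i \<in> \<alpha>\<close> by auto
  qed
  show "W \<alpha> \<inter> span (\<Union>\<beta>\<in>?Idx - {\<alpha>}. W \<beta>) = {0}"
  proof
    show "{0} \<subseteq> W \<alpha> \<inter> span (\<Union>\<beta>\<in>?Idx - {\<alpha>}. W \<beta>)" unfolding W by (simp add: span_zero)
    show "W \<alpha> \<inter> span (\<Union>\<beta>\<in>?Idx - {\<alpha>}. W \<beta>) \<subseteq> {0}"
    proof
      fix x assume x: "x \<in> W \<alpha> \<inter> span (\<Union>\<beta>\<in>?Idx - {\<alpha>}. W \<beta>)"
      have "x = 0"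
        by (rule span_disjoint_indep[OF ind, of ?G1 ?G2]) (use x sub2 dj W in auto)
      then show "x \<in> {0}" by simp
    qed
  qed
qed

locale nmod_set = nmod_data +
  assumes S: "setting" and kn: "k \<le> n - 1"
begin

lemma vsA: "vector_space sA" using S unfolding setting_def by blast
lemma vsV: "vector_space sV" using S unfolding setting_def by blast

sublocale VA: vector_space sA by (rule vsA)
sublocale VV: vector_space sV by (rule vsV)

lemma n2: "2 \<le> n" and k1: "1 \<le> k" using S unfolding setting_def by auto
lemma mlA: "multilinear sA sA n prodA" using S unfolding setting_def by blast
lemma mlV: "\<sigma> permutes {0..<n} \<Longrightarrow> length xs = n - k \<Longrightarrow> multilinear sV sV k (\<lambda>ys. act \<sigma> ys xs)"
  using S unfolding setting_def by blast
lemma mlAV: "\<sigma> permutes {0..<n} \<Longrightarrow> length ys = k \<Longrightarrow> multilinear sA sV (n - k) (\<lambda>xs. act \<sigma> ys xs)"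
  using S unfolding setting_def by blast
lemma inj_e: "inj e" and ind_e: "VA.independent (range e)" and span_e: "VA.span (range e) = UNIV"
  using S unfolding setting_def by auto
lemma inj_v: "inj v" and ind_v: "VV.independent (range v)" and span_v: "VV.span (range v) = UNIV"
  using S unfolding setting_def by auto
lemma multA: "length js = n \<Longrightarrow> \<exists>j. prodA (map e js) \<in> VA.span {e j}"
  using S unfolding setting_def by blast
lemma multV: "\<sigma> permutes {0..<n} \<Longrightarrow> length is = k \<Longrightarrow> length js = n - k \<Longrightarrow>
   \<exists>r. act \<sigma> (map v is) (map e js) \<in> VV.span {v r}"
  using S unfolding setting_def by blast

lemma v_nz: "v i \<noteq> 0" using ind_v VV.dependent_zero by force
lemma e_nz: "e j \<noteq> 0" using ind_e VA.dependent_zero by force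

lemma v_sc_eq: assumes "sV c (v i) = sV c' (v i')" "c' \<noteq> 0" shows "i = i'"
proof (rule ccontr)
  have nz: "sV c (v i) \<noteq> 0" unfolding assms(1) using assms(2) v_nz by simp
  assume ne: "i \<noteq> i'"
  have "sV c (v i) = 0"
  proof (rule VV.span_disjoint_indep[OF ind_v, of "{v i}" "{v i'}"])
    show "{v i} \<inter> {v i'} = {}" using ne inj_v by (auto dest: injD)
    show "sV c (v i) \<in> VV.span {v i}" by (simp add: VV.span_base VV.span_scale)
    show "sV c (v i) \<in> VV.span {v i'}" unfolding assms(1) by (simp add: VV.span_base VV.span_scale)
  qed auto
  with nz show False by simp
qed

lemma e_sc_eq: assumes "sA c (e i) = sA c' (e i')" "c' \<noteq> 0" shows "i = i'"
proof (rule ccontr)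
  have nz: "sA c (e i) \<noteq> 0" unfolding assms(1) using assms(2) e_nz by simp
  assume ne: "i \<noteq> i'"
  have "sA c (e i) = 0"
  proof (rule VA.span_disjoint_indep[OF ind_e, of "{e i}" "{e i'}"])
    show "{e i} \<inter> {e i'} = {}" using ne inj_e by (auto dest: injD)
    show "sA c (e i) \<in> VA.span {e i}" by (simp add: VA.span_base VA.span_scale)
    show "sA c (e i) \<in> VA.span {e i'}" unfolding assms(1) by (simp add: VA.span_base VA.span_scale)
  qed auto
  with nz show False by simp
qed

lemma ub_unique:
  assumes "(sA c (fst (ub r)), sV c (snd (ub r))) = (sA c' (fst (ub r')), sV c' (snd (ub r')))"
    and "(sA c (fst (ub r)), sV c (snd (ub r))) \<noteq> (0, 0)"
  shows "r = r'"
  using assms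
  by (cases r; cases r') (auto simp: ub_def dest: v_sc_eq e_sc_eq)

lemma a_set_unique: "r \<in> a_set \<sigma> xs \<Longrightarrow> r' \<in> a_set \<sigma> xs \<Longrightarrow> r = r'"
  unfolding a_set_def using ub_unique by (smt (verit) mem_Collect_eq)

lemma a_set_single: "r \<in> a_set \<sigma> xs \<Longrightarrow> a_set \<sigma> xs = {r}"
  using a_set_unique by blast

definition R1 where
  "R1 = {(x, y). \<exists>Z. length Z = n - 1 \<and> y \<in> mu x Z}"

lemma mu_len: "y \<in> mu x Z \<Longrightarrow> length Z = n - 1"
  unfolding mu_def by (auto split: if_splits)

lemma R1_sym: assumes "(x, y) \<in> R1" shows "(y, x) \<in> R1"
proof -
  obtain Z where lz: "length Z = n - 1" and y: "y \<in> mu x Z" using assms R1_def by auto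
  have ne: "Z \<noteq> []" using lz n2 by auto
  show ?thesis
  proof (cases "list_all isl Z")
    case True
    then obtain \<sigma> where sg: "\<sigma> permutes {0..<n}" and ya: "y \<in> a_set \<sigma> (x # map projl Z)"
      using y lz unfolding mu_def by auto
    define Z' where "Z' = map (case_sum Inr Inl) Z"
    have "x \<in> b_set \<sigma> y (map projl Z)" unfolding b_set_def using a_set_single[OF ya] by simp
    moreover have "\<not> list_all isl Z'" "list_all (\<lambda>z. \<not> isl z) Z'" "length Z' = n - 1"
      using ne lz True unfolding Z'_def by (auto simp: list_all_iff neq_Nil_conv split: sum.splits)
    moreover have "map projr Z' = map projl Z" using True unfolding Z'_def
      by (induction Z) (auto split: sum.splits)
    ultimately have "x \<in> mu y Z'" unfolding mu_def using sg by auto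
    then show ?thesis unfolding R1_def using \<open>length Z' = n - 1\<close> by auto
  next
    case False
    have nl: "list_all (\<lambda>z. \<not> isl z) Z" using y False unfolding mu_def by (auto split: if_splits)
    then obtain \<sigma> where sg: "\<sigma> permutes {0..<n}" and yb: "y \<in> b_set \<sigma> x (map projr Z)"
      using y lz False unfolding mu_def by auto
    define Z' where "Z' = map (case_sum Inr Inl) Z"
    have "x \<in> a_set \<sigma> (y # map projr Z)" using yb unfolding b_set_def by simp
    moreover have "list_all isl Z'" "length Z' = n - 1"
      using lz nl unfolding Z'_def by (auto simp: list_all_iff split: sum.splits)
    moreover have "map projl Z' = map projr Z" using nl unfolding Z'_def
      by (induction Z) (auto split: sum.splits)
    ultimately have "x \<in> mu y Z'" unfolding mu_def using sg by auto
    then show ?thesis unfolding R1_def using \<open>length Z' = n - 1\<close> by auto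
  qed
qed

lemma fold_R1: "y \<in> foldl phi {x} Zs \<Longrightarrow> (x, y) \<in> R1\<^sup>*"
proof (induction Zs arbitrary: y rule: rev_induct)
  case Nil then show ?case by simp
next
  case (snoc Z Zs)
  have "y \<in> phi (foldl phi {x} Zs) Z" using snoc.prems by simp
  then obtain w where w: "w \<in> foldl phi {x} Zs" and yw: "y \<in> mu w Z"
    unfolding phi_def by blast
  have "(w, y) \<in> R1" unfolding R1_def using yw mu_len by auto
  with snoc.IH[OF w] show ?case by auto
qed

lemma R1_fold: "(x, y) \<in> R1\<^sup>+ \<Longrightarrow> \<exists>Zs. Zs \<noteq> [] \<and> (\<forall>Z\<in>set Zs. length Z = n - 1) \<and>
        (\<forall>m<length Zs. foldl phi {x} (take m Zs) \<noteq> {}) \<and> y \<in> foldl phi {x} Zs"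
proof (induction rule: trancl_induct)
  case (base y)
  then obtain Z where "length Z = n - 1" "y \<in> mu x Z" unfolding R1_def by auto
  then show ?case by (intro exI[of _ "[Z]"]) (auto simp: phi_def)
next
  case (step y z)
  then obtain Zs where Zs: "Zs \<noteq> []" "\<forall>Z\<in>set Zs. length Z = n - 1"
     "\<forall>m<length Zs. foldl phi {x} (take m Zs) \<noteq> {}" "y \<in> foldl phi {x} Zs" by blast
  obtain Z where Z: "length Z = n - 1" "z \<in> mu y Z" using step unfolding R1_def by auto
  show ?case
  proof (intro exI[of _ "Zs @ [Z]"] conjI)
    show "\<forall>m<length (Zs @ [Z]). foldl phi {x} (take m (Zs @ [Z])) \<noteq> {}"
    proof (intro allI impI)
      fix m assume "m < length (Zs @ [Z])"
      then have "m < length Zs \<or> m = length Zs" by auto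
      then show "foldl phi {x} (take m (Zs @ [Z])) \<noteq> {}"
        using Zs by auto
    qed
    show "z \<in> foldl phi {x} (Zs @ [Z])" using Zs Z by (auto simp: phi_def)
  qed (use Zs Z in auto)
qed

lemma connected_iff: "connected x y \<longleftrightarrow> (x, y) \<in> R1\<^sup>*"
proof
  assume "connected x y" then show "(x, y) \<in> R1\<^sup>*"
    unfolding connected_def using fold_R1 by blast
next
  assume "(x, y) \<in> R1\<^sup>*"
  then have "x = y \<or> (x, y) \<in> R1\<^sup>+" by (meson rtranclD)
  then show "connected x y" unfolding connected_def using R1_fold by blast
qed

lemma rel_eq: "{(x, y). connected x y} = R1\<^sup>*"
  using connected_iff by auto

lemma sym_R1: "sym R1" using R1_sym by (auto intro: symI)

lemma equiv_conn: "equiv UNIV (R1\<^sup>*)"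
  by (rule equivI) (auto simp: refl_on_def sym_rtrancl[OF sym_R1] intro: trans_rtrancl)

lemma Omega_eq: "Omega = UNIV // R1\<^sup>*" unfolding Omega_def rel_eq ..


definition pif :: "('i + 'j) list \<Rightarrow> nat \<Rightarrow> nat" where
  "pif xs = (\<lambda>m. if m < n then (filter (\<lambda>l. isl (xs ! l)) [0..<n] @ filter (\<lambda>l. \<not> isl (xs ! l)) [0..<n]) ! m else m)"

lemma pif_perm: "pif xs permutes {0..<n}"
  unfolding pif_def
proof (rule perm_of_list)
  show "distinct (filter (\<lambda>l. isl (xs ! l)) [0..<n] @ filter (\<lambda>l. \<not> isl (xs ! l)) [0..<n])"
    by auto
  show "set (filter (\<lambda>l. isl (xs ! l)) [0..<n] @ filter (\<lambda>l. \<not> isl (xs ! l)) [0..<n]) = {0..<n}"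
    by auto
qed

lemma bprod_V:
  assumes "length xs = n" "length (filter isl xs) = k"
  shows "bprod \<sigma> xs = (0, act (\<sigma> \<circ> pif xs) (map (v \<circ> projl) (filter isl xs))
                                  (map (e \<circ> projr) (filter (\<lambda>x. \<not> isl x) xs)))"
proof -
  have P: "map (\<lambda>l. v (projl (xs ! l))) (filter (\<lambda>l. isl (xs ! l)) [0..<n]) = map (v \<circ> projl) (filter isl xs)"
    using map_nth_filter[of "v \<circ> projl" xs isl] assms(1) by (simp add: o_def)
  have Q: "map (\<lambda>l. e (projr (xs ! l))) (filter (\<lambda>l. \<not> isl (xs ! l)) [0..<n]) = map (e \<circ> projr) (filter (\<lambda>x. \<not> isl x) xs)"
    using map_nth_filter[of "e \<circ> projr" xs "\<lambda>x. \<not> isl x"] assms(1) by (simp add: o_def)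
  have lP: "length (filter (\<lambda>l. isl (xs ! l)) [0..<n]) = k"
    using arg_cong[OF P, of length] assms by simp
  show ?thesis
    unfolding bprod_def Let_def using lP k1 P Q by (simp add: pif_def)
qed

lemma Omega_class: "R1\<^sup>* `` {x} \<in> Omega" unfolding Omega_eq by (rule quotientI) simp
lemma in_own_class: "x \<in> R1\<^sup>* `` {x}" by simp
lemma class_closed: "\<alpha> \<in> Omega \<Longrightarrow> x \<in> \<alpha> \<Longrightarrow> (x, y) \<in> R1\<^sup>* \<Longrightarrow> y \<in> \<alpha>"
  unfolding Omega_eq by (auto elim!: quotientE intro: rtrancl_trans)
lemma class_unique: "\<alpha> \<in> Omega \<Longrightarrow> \<beta> \<in> Omega \<Longrightarrow> x \<in> \<alpha> \<Longrightarrow> x \<in> \<beta> \<Longrightarrow> \<alpha> = \<beta>"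
  unfolding Omega_eq using quotient_disj[OF equiv_conn] by blast

lemma act_conn:
  assumes sg: "\<sigma> permutes {0..<n}" and li: "length is = k" and lj: "length js = n - k"
    and eq: "act \<sigma> (map v is) (map e js) = sV c (v r)" and c: "c \<noteq> 0"
    and lx: "length xs = n" and fi: "filter isl xs = map Inl is"
    and fj: "filter (\<lambda>x. \<not> isl x) xs = map Inr js"
  shows "(hd xs, Inl r) \<in> R1"
proof -
  let ?\<pi> = "pif xs"
  have pp: "?\<pi> permutes {0..<n}" by (rule pif_perm)
  define \<sigma>' where "\<sigma>' = \<sigma> \<circ> inv ?\<pi>"
  have sg': "\<sigma>' permutes {0..<n}" unfolding \<sigma>'_def
    by (rule permutes_compose[OF permutes_inv[OF pp] sg])
  have comp: "\<sigma>' \<circ> ?\<pi> = \<sigma>" unfolding \<sigma>'_def comp_assoc permutes_inv_o(2)[OF pp] by simp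
  have bp: "bprod \<sigma>' xs = (0, sV c (v r))"
    using bprod_V[OF lx, of \<sigma>'] fi fj li comp eq by (simp add: o_def)
  have nz: "sV c (v r) \<noteq> 0" using c v_nz by simp
  have "Inl r \<in> a_set \<sigma>' xs" unfolding a_set_def using bp nz
    by (auto simp: ub_def intro!: exI[of _ c])
  moreover have "xs \<noteq> []" using lx n2 by auto
  ultimately have "Inl r \<in> mu (hd xs) (map Inl (tl xs))"
    unfolding mu_def using lx sg' by (auto simp: list_all_iff o_def)
  then show ?thesis unfolding R1_def using lx by force
qed

lemma prod_conn:
  assumes lj: "length js = n" and eq: "prodA (map e js) = sA c (e j)" and c: "c \<noteq> 0"
    and l: "l < n"
  shows "(Inr (js ! l), Inr j) \<in> R1"
proof -
  define \<tau> where "\<tau> = transpose 0 l"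
  have tp: "\<tau> permutes {0..<n}" unfolding \<tau>_def using l by (intro permutes_swap_id) auto
  define xs where "xs = (map (\<lambda>p. Inr (js ! \<tau> p)) [0..<n] :: ('e + _) list)"
  have lx: "length xs = n" unfolding xs_def by simp
  have tn: "p < n \<Longrightarrow> \<tau> p < n" for p unfolding \<tau>_def using l by (auto simp: transpose_def)
  have tt: "\<tau> (\<tau> p) = p" for p unfolding \<tau>_def by simp
  have P: "filter (\<lambda>l. isl (xs ! l)) [0..<n] = []" unfolding xs_def by (auto simp: filter_empty_conv)
  have M: "map (\<lambda>p. e (projr (xs ! inv \<tau> p))) [0..<n] = map e js"
    unfolding xs_def \<tau>_def using tn lj by (auto simp: \<tau>_def intro!: nth_equalityI)
  have bp: "bprod \<tau> xs = (sA c (e j), 0)"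
    unfolding bprod_def Let_def using P M eq by simp
  have nz: "sA c (e j) \<noteq> 0" using c e_nz by simp
  have "Inr j \<in> a_set \<tau> xs" unfolding a_set_def using bp nz
    by (auto simp: ub_def intro!: exI[of _ c])
  moreover have "xs \<noteq> []" using lx n2 by auto
  ultimately have "Inr j \<in> mu (hd xs) (map Inl (tl xs))"
    unfolding mu_def using lx tp by (auto simp: list_all_iff o_def)
  moreover have hx: "hd xs = Inr (js ! l)" unfolding xs_def \<tau>_def using n2 by (simp add: hd_map)
  ultimately show ?thesis unfolding R1_def using lx by force
qed


lemma nk: "0 < n - k" using kn k1 n2 by auto

lemma act_reduce:
  assumes sg: "\<sigma> permutes {0..<n}" and T: "VV.subspace T"
    and G: "\<And>is js. length is = k \<Longrightarrow> length js = n - k \<Longrightarrow> is ! 0 \<in> Iset \<Longrightarrow> js ! 0 \<in> Jset \<Longrightarrow>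
               act \<sigma> (map v is) (map e js) \<in> T"
    and ly: "length ys = k" and lx: "length xs = n - k"
    and y0: "ys ! 0 \<in> VV.span (v ` Iset)" and x0: "xs ! 0 \<in> VA.span (e ` Jset)"
  shows "act \<sigma> ys xs \<in> T"
proof -
  have S1: "act \<sigma> ys' (map e js) \<in> T"
    if lj: "length js = n - k" and j0: "js ! 0 \<in> Jset" and ly': "length ys' = k"
      and y0': "ys' ! 0 \<in> VV.span (v ` Iset)" for js ys'
  proof -
    have "(\<lambda>ys. act \<sigma> ys (map e js)) ys' \<in> T"
    proof (rule ml_reduce[OF vsV vsV mlV[OF sg] T, where S = "\<lambda>i. if i = 0 then v ` Iset else range v"])
      show "length (map e js) = n - k" using lj by simp
      show "length ys' = k" by (rule ly')
      show "\<forall>i<k. ys' ! i \<in> VV.span (if i = 0 then v ` Iset else range v)"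
        using y0' span_v by auto
      fix ws assume lw: "length ws = k" and wS: "\<forall>i<k. ws ! i \<in> (if i = 0 then v ` Iset else range v)"
      have rg: "\<forall>x\<in>set ws. x \<in> range v"
      proof
        fix x assume "x \<in> set ws"
        then obtain i where "i < length ws" "ws ! i = x" by (auto simp: in_set_conv_nth)
        then show "x \<in> range v" using wS[rule_format, of i] lw by (cases "i = 0") auto
      qed
      have mw: "map v (map (inv v) ws) = ws" by (rule map_inv_range[OF rg])
      have "ws ! 0 \<in> v ` Iset" using wS k1 by auto
      then have i0: "map (inv v) ws ! 0 \<in> Iset" using k1 lw inj_v by auto
      have "act \<sigma> (map v (map (inv v) ws)) (map e js) \<in> T"
        by (rule G) (use lw lj i0 j0 in auto)
      then show "act \<sigma> ws (map e js) \<in> T" using mw by simp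
    qed
    then show ?thesis by simp
  qed
  have "(\<lambda>xs. act \<sigma> ys xs) xs \<in> T"
  proof (rule ml_reduce[OF vsA vsV mlAV[OF sg ly] T, where S = "\<lambda>i. if i = 0 then e ` Jset else range e"])
    show "length xs = n - k" by (rule lx)
    show "\<forall>i<n - k. xs ! i \<in> VA.span (if i = 0 then e ` Jset else range e)"
      using x0 span_e by auto
    fix ws assume lw: "length ws = n - k" and wS: "\<forall>i<n - k. ws ! i \<in> (if i = 0 then e ` Jset else range e)"
    have rg: "\<forall>x\<in>set ws. x \<in> range e"
    proof
      fix x assume "x \<in> set ws"
      then obtain i where "i < length ws" "ws ! i = x" by (auto simp: in_set_conv_nth)
      then show "x \<in> range e" using wS[rule_format, of i] lw by (cases "i = 0") auto
    qed
    have mw: "map e (map (inv e) ws) = ws" by (rule map_inv_range[OF rg])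
    have "ws ! 0 \<in> e ` Jset" using wS[rule_format, of 0] nk by simp
    then have j0: "map (inv e) ws ! 0 \<in> Jset" using nk lw inj_e by auto
    have "act \<sigma> ys (map e (map (inv e) ws)) \<in> T"
      by (rule S1) (use lw j0 ly y0 in auto)
    then show "act \<sigma> ys ws \<in> T" using mw by simp
  qed
  then show ?thesis by simp
qed

lemma prod_reduce:
  assumes T: "VA.subspace T" and l: "l < n"
    and G: "\<And>js. length js = n \<Longrightarrow> js ! l \<in> Jset \<Longrightarrow> prodA (map e js) \<in> T"
    and la: "length as = n" and a0: "as ! l \<in> VA.span (e ` Jset)"
  shows "prodA as \<in> T"
proof (rule ml_reduce[OF vsA vsA mlA T, where S = "\<lambda>i. if i = l then e ` Jset else range e"])
  show "length as = n" by (rule la)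
  show "\<forall>i<n. as ! i \<in> VA.span (if i = l then e ` Jset else range e)"
    using a0 span_e by auto
  fix ws assume lw: "length ws = n" and wS: "\<forall>i<n. ws ! i \<in> (if i = l then e ` Jset else range e)"
  have rg: "\<forall>x\<in>set ws. x \<in> range e"
  proof
    fix x assume "x \<in> set ws"
    then obtain i where "i < length ws" "ws ! i = x" by (auto simp: in_set_conv_nth)
    then show "x \<in> range e" using wS[rule_format, of i] lw by (cases "i = l") auto
  qed
  have mw: "map e (map (inv e) ws) = ws" by (rule map_inv_range[OF rg])
  have "ws ! l \<in> e ` Jset" using wS l by auto
  then have j0: "map (inv e) ws ! l \<in> Jset" using l lw inj_e by auto
  have "prodA (map e (map (inv e) ws)) \<in> T"
    by (rule G) (use lw j0 in auto)
  then show "prodA ws \<in> T" using mw by simp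
qed


lemma V_part_eq: "V_part \<alpha> = VV.span (v ` {i. Inl i \<in> \<alpha>})"
  unfolding V_part_def by (rule arg_cong[where f = VV.span]) auto
lemma A_part_eq: "A_part \<alpha> = VA.span (e ` {j. Inr j \<in> \<alpha>})"
  unfolding A_part_def by (rule arg_cong[where f = VA.span]) auto

lemma Omega_disj: "\<alpha> \<in> Omega \<Longrightarrow> \<beta> \<in> Omega \<Longrightarrow> x \<in> \<alpha> \<Longrightarrow> x \<in> \<beta> \<Longrightarrow> \<alpha> = \<beta>"
  by (rule class_unique)
lemma Omega_cover: "\<exists>\<alpha>\<in>Omega. x \<in> \<alpha>" using Omega_class in_own_class by blast

lemma dsV: "internal_direct_sum sV V_part Omega_V"
  unfolding Omega_V_def
  by (rule VV.dsum_basis[OF ind_v span_v inj_v, of Inl]) (simp, metis Omega_disj, metis Omega_cover, simp add: V_part_def)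

lemma dsA: "internal_direct_sum sA A_part Omega_A"
  unfolding Omega_A_def
  by (rule VA.dsum_basis[OF ind_e span_e inj_e, of Inr]) (simp, metis Omega_disj, metis Omega_cover, simp add: A_part_def)

lemma inhV: "inherited_basis_V (V_part \<alpha>)"
  unfolding inherited_basis_V_def V_part_def
  by (rule exI[of _ "{v i | i. Inl i \<in> \<alpha>}"]) (use VV.independent_mono[OF ind_v, of "{v i | i. Inl i \<in> \<alpha>}"] in auto)

lemma inhA: "inherited_basis_A (A_part \<alpha>)"
  unfolding inherited_basis_A_def A_part_def
  by (rule exI[of _ "{e i | i. Inr i \<in> \<alpha>}"]) (use VA.independent_mono[OF ind_e, of "{e i | i. Inr i \<in> \<alpha>}"] in auto)

lemma basis_act_cases:
  assumes sg: "\<sigma> permutes {0..<n}" and li: "length is = k" and lj: "length js = n - k"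
  obtains r c where "act \<sigma> (map v is) (map e js) = sV c (v r)"
proof -
  obtain r where "act \<sigma> (map v is) (map e js) \<in> VV.span {v r}" using multV[OF sg li lj] by blast
  then show ?thesis using that unfolding VV.span_singleton by blast
qed

lemma filt1: "filter isl (map Inl is @ map Inr js) = map Inl is"
  "filter (\<lambda>x. \<not> isl x) (map Inl is @ map Inr js) = map Inr js"
  by (induction "is") (auto simp: filter_empty_conv filter_id_conv)

lemma act_conn_first:
  assumes sg: "\<sigma> permutes {0..<n}" and li: "length is = k" and lj: "length js = n - k"
    and eq: "act \<sigma> (map v is) (map e js) = sV c (v r)" and c: "c \<noteq> 0"
  shows "(Inl (is ! 0), Inl r) \<in> R1"
proof -
  have "is \<noteq> []" using li k1 by auto
  then have h: "hd (map Inl is @ map Inr js) = Inl (is ! 0)" by (cases "is") auto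
  show ?thesis using act_conn[OF sg li lj eq c, of "map Inl is @ map Inr js"] li lj filt1 h kn by simp
qed

lemma act_conn_A:
  assumes sg: "\<sigma> permutes {0..<n}" and li: "length is = k" and lj: "length js = n - k"
    and eq: "act \<sigma> (map v is) (map e js) = sV c (v r)" and c: "c \<noteq> 0"
  shows "(Inr (js ! 0), Inl r) \<in> R1"
proof -
  have "js \<noteq> []" using lj nk by auto
  then obtain j0 js' where js: "js = j0 # js'" by (cases js) auto
  have "(hd (Inr j0 # map Inl is @ map Inr js'), Inl r) \<in> R1"
    by (rule act_conn[OF sg li lj eq c]) (use li lj js kn filt1 in auto)
  then show ?thesis using js by simp
qed

lemma basis_nz_conn:
  assumes sg: "\<sigma> permutes {0..<n}" and li: "length is = k" and lj: "length js = n - k"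
    and nz: "act \<sigma> (map v is) (map e js) \<noteq> 0"
  shows "(Inl (is ! 0), Inr (js ! 0)) \<in> R1\<^sup>*"
proof -
  obtain r c where eq: "act \<sigma> (map v is) (map e js) = sV c (v r)" using basis_act_cases[OF sg li lj] by blast
  have c: "c \<noteq> 0" using nz eq by auto
  have 1: "(Inl (is ! 0), Inl r) \<in> R1" by (rule act_conn_first[OF sg li lj eq c])
  have 2: "(Inl r, Inr (js ! 0)) \<in> R1" by (rule R1_sym[OF act_conn_A[OF sg li lj eq c]])
  from 1 2 show ?thesis by auto
qed

lemma ksubV: "\<alpha> \<in> Omega \<Longrightarrow> k_submodule (V_part \<alpha>)"
  unfolding k_submodule_def
proof (intro conjI allI impI)
  assume aO: "\<alpha> \<in> Omega"
  show "VV.subspace (V_part \<alpha>)" unfolding V_part_def by simp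
  fix \<sigma> ys and xs :: "'b list" assume sg: "\<sigma> permutes {0..<n}" and ly: "length ys = k" and lx: "length xs = n - k"
    and hy: "hd ys \<in> V_part \<alpha>"
  have y0: "ys ! 0 \<in> VV.span (v ` {i. Inl i \<in> \<alpha>})"
    using hy ly k1 V_part_eq by (cases ys) auto
  show "act \<sigma> ys xs \<in> V_part \<alpha>"
  proof (rule act_reduce[OF sg _ _ ly lx y0, where Jset = UNIV])
    show "VV.subspace (V_part \<alpha>)" unfolding V_part_def by simp
    show "xs ! 0 \<in> VA.span (range e)" using span_e by simp
    fix "is" and js :: "'d list" assume li: "length is = k" and lj: "length js = n - k" and i0: "is ! 0 \<in> {i. Inl i \<in> \<alpha>}"
    obtain r c where eq: "act \<sigma> (map v is) (map e js) = sV c (v r)" using basis_act_cases[OF sg li lj] by blast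
    show "act \<sigma> (map v is) (map e js) \<in> V_part \<alpha>"
    proof (cases "c = 0")
      case True then show ?thesis using eq unfolding V_part_def by (simp add: VV.span_zero)
    next
      case False
      have "(Inl (is ! 0), Inl r) \<in> R1" by (rule act_conn_first[OF sg li lj eq False])
      then have "Inl r \<in> \<alpha>" using class_closed[OF aO] i0 by blast
      then have "v r \<in> {v i | i. Inl i \<in> \<alpha>}" by auto
      then have "sV c (v r) \<in> VV.span {v i | i. Inl i \<in> \<alpha>}" by (rule VV.span_scale[OF VV.span_base])
      then show ?thesis using eq unfolding V_part_def by simp
    qed
  qed
qed

lemma idealA: "\<beta> \<in> Omega \<Longrightarrow> ideal_A (A_part \<beta>)"
  unfolding ideal_A_def
proof (intro conjI allI impI)
  assume bO: "\<beta> \<in> Omega"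
  show "VA.subspace (A_part \<beta>)" unfolding A_part_def by simp
  fix as assume la: "length as = n" and ex: "\<exists>l<n. as ! l \<in> A_part \<beta>"
  then obtain l where l: "l < n" and al: "as ! l \<in> VA.span (e ` {j. Inr j \<in> \<beta>})"
    using A_part_eq by auto
  show "prodA as \<in> A_part \<beta>"
  proof (rule prod_reduce[OF _ l _ la al])
    show "VA.subspace (A_part \<beta>)" unfolding A_part_def by simp
    fix js assume lj: "length js = n" and jl: "js ! l \<in> {j. Inr j \<in> \<beta>}"
    obtain j where "prodA (map e js) \<in> VA.span {e j}" using multA[OF lj] by blast
    then obtain c where eq: "prodA (map e js) = sA c (e j)" unfolding VA.span_singleton by blast
    show "prodA (map e js) \<in> A_part \<beta>"
    proof (cases "c = 0")
      case True then show ?thesis using eq unfolding A_part_def by (simp add: VA.span_zero)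
    next
      case False
      have "(Inr (js ! l), Inr j) \<in> R1" by (rule prod_conn[OF lj eq False l])
      then have "Inr j \<in> \<beta>" using class_closed[OF bO] jl by blast
      then have "e j \<in> {e j | j. Inr j \<in> \<beta>}" by auto
      then have "sA c (e j) \<in> VA.span {e j | j. Inr j \<in> \<beta>}" by (rule VA.span_scale[OF VA.span_base])
      then show ?thesis using eq unfolding A_part_def by simp
    qed
  qed
qed


definition EXB where
  "EXB Iset Jset \<longleftrightarrow> (\<exists>\<sigma> is js. \<sigma> permutes {0..<n} \<and> length is = k \<and> length js = n - k \<and>
      is ! 0 \<in> Iset \<and> js ! 0 \<in> Jset \<and> act \<sigma> (map v is) (map e js) \<noteq> 0)"

lemma Pspan_iff:
  "Pspan (VV.span (v ` Iset) # replicate (k - 1) UNIV) (VA.span (e ` Jset) # replicate (n - k - 1) UNIV) \<noteq> {0}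
    \<longleftrightarrow> EXB Iset Jset"
proof
  let ?Ss = "VV.span (v ` Iset) # replicate (k - 1) UNIV"
  let ?Ts = "VA.span (e ` Jset) # replicate (n - k - 1) UNIV"
  let ?G = "{act \<sigma> ys xs | \<sigma> ys xs. \<sigma> permutes {0..<n} \<and>
        length ys = length ?Ss \<and> length xs = length ?Ts \<and>
        (\<forall>l<length ?Ss. ys ! l \<in> ?Ss ! l) \<and> (\<forall>l<length ?Ts. xs ! l \<in> ?Ts ! l)}"
  have lS: "length ?Ss = k" using k1 by simp
  have lT: "length ?Ts = n - k" using nk by simp
  show "EXB Iset Jset" if ne: "Pspan ?Ss ?Ts \<noteq> {0}"
  proof (rule ccontr)
    assume nE: "\<not> EXB Iset Jset"
    have "?G \<subseteq> {0}"
    proof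
      fix z assume "z \<in> ?G"
      then obtain \<sigma> ys xs where z: "z = act \<sigma> ys xs" and sg: "\<sigma> permutes {0..<n}"
        and ly: "length ys = k" and lx: "length xs = n - k"
        and yl: "\<forall>l<length ?Ss. ys ! l \<in> ?Ss ! l" and xl: "\<forall>l<length ?Ts. xs ! l \<in> ?Ts ! l"
        using lS lT by auto
      have y0: "ys ! 0 \<in> VV.span (v ` Iset)" using yl lS k1 by fastforce
      have x0: "xs ! 0 \<in> VA.span (e ` Jset)" using xl lT nk by fastforce
      have "act \<sigma> ys xs \<in> {0}"
      proof (rule act_reduce[OF sg VV.subspace_single_0 _ ly lx y0 x0])
        fix "is" js assume "length is = k" "length js = n - k" "is ! 0 \<in> Iset" "js ! 0 \<in> Jset"
        then show "act \<sigma> (map v is) (map e js) \<in> {0}" using nE sg unfolding EXB_def by blast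
      qed
      then show "z \<in> {0}" using z by simp
    qed
    then have "Pspan ?Ss ?Ts \<subseteq> {0}" unfolding Pspan_def
      by (rule VV.span_minimal) simp
    moreover have "0 \<in> Pspan ?Ss ?Ts" unfolding Pspan_def by (rule VV.span_zero)
    ultimately show False using ne by auto
  qed
  show "Pspan ?Ss ?Ts \<noteq> {0}" if E: "EXB Iset Jset"
  proof -
    obtain \<sigma> "is" js where sg: "\<sigma> permutes {0..<n}" and li: "length is = k" and lj: "length js = n - k"
      and i0: "is ! 0 \<in> Iset" and j0: "js ! 0 \<in> Jset" and nz: "act \<sigma> (map v is) (map e js) \<noteq> 0"
      using E unfolding EXB_def by blast
    have "act \<sigma> (map v is) (map e js) \<in> ?G"
    proof (intro CollectI exI conjI)
      show "act \<sigma> (map v is) (map e js) = act \<sigma> (map v is) (map e js)" ..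
      show "\<sigma> permutes {0..<n}" by (rule sg)
      show "length (map v is) = length ?Ss" using li lS by simp
      show "length (map e js) = length ?Ts" using lj lT by simp
      show "\<forall>l<length ?Ss. map v is ! l \<in> ?Ss ! l"
      proof (intro allI impI)
        fix l assume l: "l < length ?Ss"
        show "map v is ! l \<in> ?Ss ! l"
        proof (cases l)
          case 0 then show ?thesis using i0 li k1 by (auto intro: VV.span_base)
        next
          case (Suc m) then show ?thesis using l by simp
        qed
      qed
      show "\<forall>l<length ?Ts. map e js ! l \<in> ?Ts ! l"
      proof (intro allI impI)
        fix l assume l: "l < length ?Ts"
        show "map e js ! l \<in> ?Ts ! l"
        proof (cases l)
          case 0 then show ?thesis using j0 lj nk by (auto intro: VA.span_base)
        next
          case (Suc m) then show ?thesis using l by simp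
        qed
      qed
    qed
    then have "act \<sigma> (map v is) (map e js) \<in> Pspan ?Ss ?Ts" unfolding Pspan_def by (rule VV.span_base)
    then show ?thesis using nz by auto
  qed
qed

lemma repV: "replicate k UNIV = VV.span (v ` UNIV) # replicate (k - 1) UNIV"
  using k1 span_v by (cases k) auto
lemma repA: "replicate (n - k) UNIV = VA.span (e ` UNIV) # replicate (n - k - 1) UNIV"
  using nk span_e by (cases "n - k") auto

lemma Omega'_V_eq: "Omega'_V = {\<alpha>\<in>Omega_V. EXB {i. Inl i \<in> \<alpha>} UNIV}"
  unfolding Omega'_V_def V_part_eq repA Pspan_iff ..
lemma Omega'_A_eq: "Omega'_A = {\<beta>\<in>Omega_A. EXB UNIV {j. Inr j \<in> \<beta>}}"
  unfolding Omega'_A_def A_part_eq repV Pspan_iff ..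

lemma Omega'_same: "Omega'_V = Omega'_A"
proof (intro equalityI subsetI)
  fix \<alpha> assume "\<alpha> \<in> Omega'_V"
  then have aO: "\<alpha> \<in> Omega" and E: "EXB {i. Inl i \<in> \<alpha>} UNIV" unfolding Omega'_V_eq Omega_V_def by auto
  then obtain \<sigma> "is" js where sg: "\<sigma> permutes {0..<n}" and li: "length is = k" and lj: "length js = n - k"
      and i0: "Inl (is ! 0) \<in> \<alpha>" and nz: "act \<sigma> (map v is) (map e js) \<noteq> 0"
      unfolding EXB_def by blast
  have j0: "Inr (js ! 0) \<in> \<alpha>" using class_closed[OF aO i0 basis_nz_conn[OF sg li lj nz]] .
  have "e (js ! 0) \<in> A_part \<alpha>" unfolding A_part_def using j0 by (auto intro: VA.span_base)
  then have "A_part \<alpha> \<noteq> {0}" using e_nz by auto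
  moreover have "EXB UNIV {j. Inr j \<in> \<alpha>}" unfolding EXB_def using sg li lj j0 nz by blast
  ultimately show "\<alpha> \<in> Omega'_A" unfolding Omega'_A_eq Omega_A_def using aO by auto
next
  fix \<alpha> assume "\<alpha> \<in> Omega'_A"
  then have aO: "\<alpha> \<in> Omega" and E: "EXB UNIV {j. Inr j \<in> \<alpha>}" unfolding Omega'_A_eq Omega_A_def by auto
  then obtain \<sigma> "is" js where sg: "\<sigma> permutes {0..<n}" and li: "length is = k" and lj: "length js = n - k"
      and j0: "Inr (js ! 0) \<in> \<alpha>" and nz: "act \<sigma> (map v is) (map e js) \<noteq> 0"
      unfolding EXB_def by blast
  have "(Inr (js ! 0), Inl (is ! 0)) \<in> R1\<^sup>*"
    using basis_nz_conn[OF sg li lj nz] sym_rtrancl[OF sym_R1] by (auto dest: symD)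
  then have i0: "Inl (is ! 0) \<in> \<alpha>" using class_closed[OF aO j0] by blast
  have "v (is ! 0) \<in> V_part \<alpha>" unfolding V_part_def using i0 by (auto intro: VV.span_base)
  then have "V_part \<alpha> \<noteq> {0}" using v_nz by auto
  moreover have "EXB {i. Inl i \<in> \<alpha>} UNIV" unfolding EXB_def using sg li lj i0 nz by blast
  ultimately show "\<alpha> \<in> Omega'_V" unfolding Omega'_V_eq Omega_V_def using aO by auto
qed

lemma final_bij:
  "\<exists>f. bij_betw f Omega'_V Omega'_A \<and>
     (\<forall>\<alpha>\<in>Omega'_V. Pspan (V_part \<alpha> # replicate (k - 1) UNIV) (A_part (f \<alpha>) # replicate (n - k - 1) UNIV) \<noteq> {0} \<and>
        (\<forall>\<beta>\<in>Omega_A. \<beta> \<noteq> f \<alpha> \<longrightarrow>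
           Pspan (V_part \<alpha> # replicate (k - 1) UNIV) (A_part \<beta> # replicate (n - k - 1) UNIV) = {0}))"
proof (intro exI[of _ id] conjI ballI impI)
  show "bij_betw id Omega'_V Omega'_A" using Omega'_same by simp
  fix \<alpha> assume aV: "\<alpha> \<in> Omega'_V"
  then have aO: "\<alpha> \<in> Omega" and E: "EXB {i. Inl i \<in> \<alpha>} UNIV" unfolding Omega'_V_eq Omega_V_def by auto
  then obtain \<sigma> "is" js where sg: "\<sigma> permutes {0..<n}" and li: "length is = k" and lj: "length js = n - k"
      and i0: "Inl (is ! 0) \<in> \<alpha>" and nz: "act \<sigma> (map v is) (map e js) \<noteq> 0"
      unfolding EXB_def by blast
  have j0: "Inr (js ! 0) \<in> \<alpha>" using class_closed[OF aO i0 basis_nz_conn[OF sg li lj nz]] .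
  have "EXB {i. Inl i \<in> \<alpha>} {j. Inr j \<in> \<alpha>}" unfolding EXB_def using sg li lj i0 j0 nz by blast
  then show "Pspan (V_part \<alpha> # replicate (k - 1) UNIV) (A_part (id \<alpha>) # replicate (n - k - 1) UNIV) \<noteq> {0}"
    unfolding V_part_eq A_part_eq Pspan_iff by simp
  fix \<beta> assume bA: "\<beta> \<in> Omega_A" and ne: "\<beta> \<noteq> id \<alpha>"
  show "Pspan (V_part \<alpha> # replicate (k - 1) UNIV) (A_part \<beta> # replicate (n - k - 1) UNIV) = {0}"
  proof (rule ccontr)
    assume "Pspan (V_part \<alpha> # replicate (k - 1) UNIV) (A_part \<beta> # replicate (n - k - 1) UNIV) \<noteq> {0}"
    then have "EXB {i. Inl i \<in> \<alpha>} {j. Inr j \<in> \<beta>}" unfolding V_part_eq A_part_eq Pspan_iff .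
    then obtain \<sigma> "is" js where sg: "\<sigma> permutes {0..<n}" and li: "length is = k" and lj: "length js = n - k"
        and i0: "Inl (is ! 0) \<in> \<alpha>" and j0: "Inr (js ! 0) \<in> \<beta>" and nz: "act \<sigma> (map v is) (map e js) \<noteq> 0"
      unfolding EXB_def by blast
    have "Inr (js ! 0) \<in> \<alpha>" using class_closed[OF aO i0 basis_nz_conn[OF sg li lj nz]] .
    moreover have "\<beta> \<in> Omega" using bA unfolding Omega_A_def by simp
    ultimately have "\<alpha> = \<beta>" using class_unique[OF aO _ _ j0] by blast
    then show False using ne by simp
  qed
qed

lemma main:
  "internal_direct_sum sV V_part Omega_V
   \<and> (\<forall>\<alpha>\<in>Omega_V. k_submodule (V_part \<alpha>) \<and> inherited_basis_V (V_part \<alpha>))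
   \<and> internal_direct_sum sA A_part Omega_A
   \<and> (\<forall>\<beta>\<in>Omega_A. ideal_A (A_part \<beta>) \<and> inherited_basis_A (A_part \<beta>))"
  using dsV dsA ksubV inhV idealA inhA unfolding Omega_V_def Omega_A_def by auto

end

theorem mainTheorem12:
  fixes n k :: nat
    and sA :: "'f::field \<Rightarrow> 'a::ab_group_add \<Rightarrow> 'a"
    and sV :: "'f \<Rightarrow> 'v::ab_group_add \<Rightarrow> 'v"
    and prodA :: "'a list \<Rightarrow> 'a"
    and act :: "(nat \<Rightarrow> nat) \<Rightarrow> 'v list \<Rightarrow> 'a list \<Rightarrow> 'v"
    and e :: "'j \<Rightarrow> 'a" and v :: "'i \<Rightarrow> 'v"
  assumes "nmod_data.setting n k sA sV prodA act e v"
    and "1 \<le> k" and "k \<le> n - 1"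
  shows "internal_direct_sum sV (nmod_data.V_part sV v) (nmod_data.Omega_V n k sA sV prodA act e v)
       \<and> (\<forall>\<alpha>\<in>nmod_data.Omega_V n k sA sV prodA act e v.
            nmod_data.k_submodule n k sV act (nmod_data.V_part sV v \<alpha>)
          \<and> nmod_data.inherited_basis_V sV v (nmod_data.V_part sV v \<alpha>))
       \<and> internal_direct_sum sA (nmod_data.A_part sA e) (nmod_data.Omega_A n k sA sV prodA act e v)
       \<and> (\<forall>\<beta>\<in>nmod_data.Omega_A n k sA sV prodA act e v.
            nmod_data.ideal_A n sA prodA (nmod_data.A_part sA e \<beta>)
          \<and> nmod_data.inherited_basis_A sA e (nmod_data.A_part sA e \<beta>))
       \<and> (\<exists>f. bij_betw f (nmod_data.Omega'_V n k sA sV prodA act e v)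
                         (nmod_data.Omega'_A n k sA sV prodA act e v)
            \<and> (\<forall>\<alpha>\<in>nmod_data.Omega'_V n k sA sV prodA act e v.
                 nmod_data.Pspan n sV act (nmod_data.V_part sV v \<alpha> # replicate (k - 1) UNIV)
                    (nmod_data.A_part sA e (f \<alpha>) # replicate (n - k - 1) UNIV) \<noteq> {0}
               \<and> (\<forall>\<beta>\<in>nmod_data.Omega_A n k sA sV prodA act e v. \<beta> \<noteq> f \<alpha> \<longrightarrow>
                 nmod_data.Pspan n sV act (nmod_data.V_part sV v \<alpha> # replicate (k - 1) UNIV)
                    (nmod_data.A_part sA e \<beta> # replicate (n - k - 1) UNIV) = {0})))"
proof -
  interpret X: nmod_set n k sA sV prodA act e v
    by unfold_locales (use assms in auto)
  show ?thesis using X.main X.final_bij by blast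
qed

end
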